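(* In the setting of a softmax single-layer network with parameters $\theta_1,\dots,\theta_C\in\mathbb{R}^M$, ERM probabilities $p_i=e^{\theta_i^\top x}/\sum_je^{\theta_j^\top x}$ at the test input $x\in\mathbb{R}^M$, and $g$ defined from the training data matrix $X_N$ by $g=x_\perp/\|x_\perp\|^2$ if $x_\perp=(I-X_N^+X_N)x\neq0$ and $g=X_N^+X_N^{+\top}x/(1+x^\top X_N^+X_N^{+\top}x)$ otherwise: for each label $i$ let $\theta^{(i)}$ be obtained from $\theta$ by replacing $\theta_i$ with $\theta_i+g\big(\ln\sum_je^{\theta_j^\top x}-\theta_i^\top x\big)$. Then the pNML regret $\Gamma=\log\sum_{i=1}^C p_{\theta^{(i)}}(i\mid x)$ equals $$\Gamma=\log\sum_{i=1}^C\frac{p_i}{p_i+p_i^{\,x^\top g}(1-p_i)},$$ and the pNML assignment is $q_{\mathrm{pNML}}(i\mid x)=\dfrac{p_{\theta^{(i)}}(i\mid x)}{\sum_{k=1}^Cp_{\theta^{(k)}}(k\mid x)}$.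
   Context: $p_\theta(i\mid x)=e^{\theta_i^\top x}/\sum_{j=1}^Ce^{\theta_j^\top x}$; $X_N^+$ is the Moore–Penrose pseudo-inverse of the training data matrix $X_N\in\mathbb{R}^{N\times M}$. *)

theory Defs
  imports "HOL-Analysis.Analysis"
begin

definition pinv :: "real^'m^'n \<Rightarrow> real^'n^'m" where
  "pinv X = (THE Y. X ** Y ** X = X \<and> Y ** X ** Y = Y \<and>
                    transpose (X ** Y) = X ** Y \<and> transpose (Y ** X) = Y ** X)"

definition softmax_prob :: "('c::finite \<Rightarrow> real^'m) \<Rightarrow> real^'m \<Rightarrow> 'c \<Rightarrow> real" where
  "softmax_prob \<theta> x i = exp (\<theta> i \<bullet> x) / (\<Sum>j\<in>UNIV. exp (\<theta> j \<bullet> x))"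

definition x_perp :: "real^'m^'n \<Rightarrow> real^'m \<Rightarrow> real^'m" where
  "x_perp X x = (mat 1 - pinv X ** X) *v x"

definition g_vec :: "real^'m^'n \<Rightarrow> real^'m \<Rightarrow> real^'m" where
  "g_vec X x = (if x_perp X x \<noteq> 0 then (1 / (norm (x_perp X x))\<^sup>2) *\<^sub>R x_perp X x
     else (1 / (1 + x \<bullet> ((pinv X ** transpose (pinv X)) *v x))) *\<^sub>R
          ((pinv X ** transpose (pinv X)) *v x))"

definition theta_upd :: "real^'m^'n \<Rightarrow> ('c::finite \<Rightarrow> real^'m) \<Rightarrow> real^'m \<Rightarrow> 'c \<Rightarrow> ('c \<Rightarrow> real^'m)" where
  "theta_upd X \<theta> x i = \<theta>(i := \<theta> i + (ln (\<Sum>j\<in>UNIV. exp (\<theta> j \<bullet> x)) - \<theta> i \<bullet> x) *\<^sub>R g_vec X x)"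

end

theory Submission
  imports Defs
begin

lemma key_alg:
  fixes a S R t :: real
  assumes S: "S > 0" and R: "R = S - exp a" and pos: "exp a < S \<or> exp a \<le> S"
  shows "exp (a + (ln S - a) * t) / (R + exp (a + (ln S - a) * t))
       = (exp a / S) / (exp a / S + (exp a / S) powr t * (1 - exp a / S))"
proof -
  have p: "exp a / S > 0" using S by simp
  have lnp: "ln (exp a / S) = a - ln S" using S by (simp add: ln_div)
  have pw: "(exp a / S) powr t = exp ((a - ln S) * t)"
    using p lnp S by (simp add: powr_def mult.commute)
  have e1: "exp (a + (ln S - a) * t) = exp a * exp ((ln S - a) * t)" by (simp add: exp_add)
  have inv: "exp ((a - ln S) * t) * exp ((ln S - a) * t) = 1"
    by (simp add: exp_add[symmetric] algebra_simps)
  define E where "E = exp ((ln S - a) * t)"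
  define F where "F = exp ((a - ln S) * t)"
  have EF: "F * E = 1" using inv by (simp add: E_def F_def)
  have Epos: "E > 0" "F > 0" by (auto simp: E_def F_def)
  have ea: "exp a > 0" by simp
  show ?thesis
    unfolding pw e1 R E_def[symmetric] F_def[symmetric]
  proof -
    have E: "E = 1 / F" using EF Epos by (simp add: field_simps)
    show "exp a * E / (S - exp a + exp a * E) = exp a / S / (exp a / S + F * (1 - exp a / S))"
      unfolding E using S Epos ea by (simp add: field_simps)
  qed
qed

lemma sum_upd_univ:
  fixes f :: "'c::finite \<Rightarrow> real"
  shows "(\<Sum>j\<in>UNIV. (f(i := y)) j) = (\<Sum>j\<in>UNIV. f j) - f i + y"
proof -
  have "(\<Sum>j\<in>UNIV. (f(i := y)) j) = (f(i:=y)) i + (\<Sum>j\<in>UNIV - {i}. (f(i := y)) j)"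
    by (rule sum.remove) auto
  also have "(\<Sum>j\<in>UNIV - {i}. (f(i := y)) j) = (\<Sum>j\<in>UNIV - {i}. f j)"
    by (rule sum.cong) auto
  also have "\<dots> = (\<Sum>j\<in>UNIV. f j) - f i"
    by (simp add: sum_diff1)
  finally show ?thesis by simp
qed

lemma pointwise:
  fixes X :: "real^'m^'n" and \<theta> :: "'c::finite \<Rightarrow> real^'m" and x :: "real^'m"
  shows "softmax_prob (theta_upd X \<theta> x i) x i =
     softmax_prob \<theta> x i /
                 (softmax_prob \<theta> x i + softmax_prob \<theta> x i powr (x \<bullet> g_vec X x) * (1 - softmax_prob \<theta> x i))"
proof -
  define S where "S = (\<Sum>j\<in>UNIV. exp (\<theta> j \<bullet> x))"
  define a where "a = \<theta> i \<bullet> x"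
  define t where "t = x \<bullet> g_vec X x"
  have Spos: "S > 0" unfolding S_def by (rule sum_pos) auto
  have le: "exp a \<le> S" unfolding S_def a_def
    by (rule member_le_sum) auto
  have newi: "theta_upd X \<theta> x i i \<bullet> x = a + (ln S - a) * t"
    unfolding theta_upd_def S_def a_def t_def by (simp add: inner_add_right inner_commute)
  have funeq: "(\<lambda>j. exp (theta_upd X \<theta> x i j \<bullet> x)) = (\<lambda>j. exp (\<theta> j \<bullet> x))(i := exp (a + (ln S - a) * t))"
    using newi by (auto simp: theta_upd_def)
  have sumeq: "(\<Sum>j\<in>UNIV. exp (theta_upd X \<theta> x i j \<bullet> x)) = (S - exp a) + exp (a + (ln S - a) * t)"
    unfolding funeq sum_upd_univ S_def a_def by simp
  have "softmax_prob (theta_upd X \<theta> x i) x i = exp (a + (ln S - a) * t) / ((S - exp a) + exp (a + (ln S - a) * t))"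
    unfolding softmax_prob_def sumeq newi ..
  also have "\<dots> = (exp a / S) / (exp a / S + (exp a / S) powr t * (1 - exp a / S))"
    by (rule key_alg) (use Spos le in auto)
  finally show ?thesis unfolding softmax_prob_def S_def a_def t_def .
qed

theorem mainTheorem12:
  fixes X :: "real^'m^'n" and \<theta> :: "'c::finite \<Rightarrow> real^'m" and x :: "real^'m"
  shows "ln (\<Sum>i\<in>UNIV. softmax_prob (theta_upd X \<theta> x i) x i)
           = ln (\<Sum>i\<in>UNIV. softmax_prob \<theta> x i /
                 (softmax_prob \<theta> x i + softmax_prob \<theta> x i powr (x \<bullet> g_vec X x) * (1 - softmax_prob \<theta> x i)))
       \<and> (\<forall>i. softmax_prob (theta_upd X \<theta> x i) x i / (\<Sum>k\<in>UNIV. softmax_prob (theta_upd X \<theta> x k) x k)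
           = (softmax_prob \<theta> x i /
                 (softmax_prob \<theta> x i + softmax_prob \<theta> x i powr (x \<bullet> g_vec X x) * (1 - softmax_prob \<theta> x i)))
             / (\<Sum>k\<in>UNIV. softmax_prob \<theta> x k /
                 (softmax_prob \<theta> x k + softmax_prob \<theta> x k powr (x \<bullet> g_vec X x) * (1 - softmax_prob \<theta> x k))))"
  by (simp add: pointwise)

end
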